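(* Let $s\ge1$ and $T\in\mathcal{T}(s)$. Then the tableau $D_{2,s}(T)$ satisfies conditions (C1)--(C5); i.e. $D_{2,s}(T)\in B(k\varpi_2)$ for some $0\le k\le s$.
   Context: Let $n\ge4$. Alphabet: $1<2<\dots<n-1<\{n,\bar n\}<\overline{n-1}<\dots<\bar2<\bar1$, a partial order in which $n$ and $\bar n$ are incomparable; set $\bar{\bar i}=i$. A tableau of shape $(k,k)$ is a sequence of $k$ columns, column $j$ with top entry $a_j$ and bottom entry $b_j$, written $\binom{a_1}{b_1}\cdots\binom{a_k}{b_k}$ ($\binom{x}{y}$ denotes a column, not a binomial coefficient). Conditions: (C1) $a_j\le a_{j+1}$ and $b_j\le b_{j+1}$ for all $j$; (C2) $b_j\not\le a_j$; (C3) no $j$ and letter $x$ with $a_j=a_{j+1}=x$, $b_{j+1}=\bar x$, and no $j,x$ with $a_j=x$, $b_j=b_{j+1}=\bar x$; (C4) no $j<j'$ with columns $j,j'$ equal to $\binom{n-1}{n},\binom{n}{\overline{n-1}}$ respectively, nor to $\binom{n-1}{\bar n},\binom{\bar n}{\overline{n-1}}$; (C5) no column $\binom{1}{\bar1}$. $B(k\varpi_2)$ = tableaux of shape $(k,k)$ satisfying (C1)--(C5) ($B(0)$ consists of the empty tableau); $\mathcal{T}(s)$ = tableaux of shape $(s,s)$ satisfying (C1),(C2),(C4). For $T\in\mathcal{T}(s)\setminus B(s\varpi_2)$ not equal to $\binom{1}{\bar1}\cdots\binom{1}{\bar1}$, there are a unique letter $a\in\{1,\dots,n,\bar n\}$ and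 $m\ge1$ such that $T$ contains consecutive columns of one of the forms (i) $\binom{a}{b_1}\binom{a}{\bar a}^m\binom{c_1}{d_1}$ with $b_1\ne\bar a$ and ($c_1\ne a$ or $d_1\ne\bar a$); (ii) $\binom{b_2}{c_2}\binom{a}{\bar a}^m\binom{d_2}{\bar a}$ with $d_2\neq a$ and ($b_2\ne a$ or $c_2\ne\bar a$); (iii) $\binom{b_3}{c_3}\binom{a}{\bar a}^{m+1}\binom{d_3}{e_3}$ with $b_3\ne a$, $e_3\ne\bar a$ (bounding columns may be absent at the ends of $T$); here $\binom{a}{\bar a}^m$ means $m$ consecutive columns $\binom{a}{\bar a}$. The drop map $D_{2,s}$ is: $D_{2,s}(\binom{1}{\bar1}\cdots\binom{1}{\bar1})$ is the empty tableau; $D_{2,s}(T)=T$ if $T\in B(s\varpi_2)$; otherwise $D_{2,s}(T)$ is obtained from $T$ by deleting $m$ of the columns $\binom{a}{\bar a}$ of this configuration (all $m$ in cases (i),(ii); $m$ of the $m+1$ in case (iii)). *)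

theory Defs
  imports Main
begin

text \<open>Letters of the alphabet for type D_n: Unb i stands for i, Bar i for i-bar,
  with 1 \<le> i \<le> n.\<close>
datatype letter = Unb nat | Bar nat

definition valid_letter :: "nat \<Rightarrow> letter \<Rightarrow> bool" where
  "valid_letter n x = (case x of Unb i \<Rightarrow> 1 \<le> i \<and> i \<le> n | Bar i \<Rightarrow> 1 \<le> i \<and> i \<le> n)"

fun bar :: "letter \<Rightarrow> letter" where
  "bar (Unb i) = Bar i"
| "bar (Bar i) = Unb i"

text \<open>Position of a letter in 1 < 2 < ... < n-1 < {n, n-bar} < (n-1)-bar < ... < 1-bar.\<close>
fun rank :: "nat \<Rightarrow> letter \<Rightarrow> nat" where
  "rank n (Unb i) = i"
| "rank n (Bar i) = 2 * n + 1 - i"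

definition leq :: "nat \<Rightarrow> letter \<Rightarrow> letter \<Rightarrow> bool" where
  "leq n x y = (x = y \<or> (rank n x < rank n y \<and> \<not> (x = Unb n \<and> y = Bar n)
                                         \<and> \<not> (x = Bar n \<and> y = Unb n)))"

text \<open>A column is (top, bottom); a tableau of shape (k,k) is the list of its k columns.\<close>
type_synonym column = "letter \<times> letter"
type_synonym tableau = "column list"

definition letters_ok :: "nat \<Rightarrow> tableau \<Rightarrow> bool" where
  "letters_ok n T = (\<forall>c\<in>set T. valid_letter n (fst c) \<and> valid_letter n (snd c))"

definition C1 :: "nat \<Rightarrow> tableau \<Rightarrow> bool" where
  "C1 n T = (\<forall>j. Suc j < length T \<longrightarrow>
      leq n (fst (T ! j)) (fst (T ! Suc j)) \<and> leq n (snd (T ! j)) (snd (T ! Suc j)))"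

definition C2 :: "nat \<Rightarrow> tableau \<Rightarrow> bool" where
  "C2 n T = (\<forall>j < length T. \<not> leq n (snd (T ! j)) (fst (T ! j)))"

definition C3 :: "tableau \<Rightarrow> bool" where
  "C3 T = ((\<not> (\<exists>j x. Suc j < length T \<and> fst (T ! j) = x \<and> fst (T ! Suc j) = x
                        \<and> snd (T ! Suc j) = bar x))
         \<and> (\<not> (\<exists>j x. Suc j < length T \<and> fst (T ! j) = x \<and> snd (T ! j) = bar x
                        \<and> snd (T ! Suc j) = bar x)))"

definition C4 :: "nat \<Rightarrow> tableau \<Rightarrow> bool" where
  "C4 n T = (\<not> (\<exists>j j'. j < j' \<and> j' < length T \<and>
        ((T ! j = (Unb (n - 1), Unb n) \<and> T ! j' = (Unb n, Bar (n - 1))) \<or>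
         (T ! j = (Unb (n - 1), Bar n) \<and> T ! j' = (Bar n, Bar (n - 1))))))"

definition C5 :: "tableau \<Rightarrow> bool" where
  "C5 T = ((Unb 1, Bar 1) \<notin> set T)"

definition inB :: "nat \<Rightarrow> nat \<Rightarrow> tableau \<Rightarrow> bool" where
  "inB n k T = (length T = k \<and> letters_ok n T \<and> C1 n T \<and> C2 n T \<and> C3 T \<and> C4 n T \<and> C5 T)"

definition inTab :: "nat \<Rightarrow> nat \<Rightarrow> tableau \<Rightarrow> bool" where
  "inTab n s T = (length T = s \<and> letters_ok n T \<and> C1 n T \<and> C2 n T \<and> C4 n T)"

text \<open>One drop step: T' arises from T by deleting m columns (a, a-bar) of a configuration
  of type (i), (ii) or (iii).\<close>
definition drop_step :: "nat \<Rightarrow> tableau \<Rightarrow> tableau \<Rightarrow> bool" where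
  "drop_step n T T' = (\<exists>a m P Q. (a \<in> Unb ` {1..n} \<or> a = Bar n) \<and> m \<ge> 1 \<and>
     ((\<exists>b1. T = P @ [(a, b1)] @ replicate m (a, bar a) @ Q \<and> b1 \<noteq> bar a \<and>
            (Q = [] \<or> hd Q \<noteq> (a, bar a)) \<and> T' = P @ [(a, b1)] @ Q)
    \<or> (\<exists>d2. T = P @ replicate m (a, bar a) @ [(d2, bar a)] @ Q \<and> d2 \<noteq> a \<and>
            (P = [] \<or> last P \<noteq> (a, bar a)) \<and> T' = P @ [(d2, bar a)] @ Q)
    \<or> (T = P @ replicate (m + 1) (a, bar a) @ Q \<and>
            (P = [] \<or> fst (last P) \<noteq> a) \<and> (Q = [] \<or> snd (hd Q) \<noteq> bar a) \<and>
            T' = P @ replicate 1 (a, bar a) @ Q)))"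

definition drop_map :: "nat \<Rightarrow> nat \<Rightarrow> tableau \<Rightarrow> tableau" where
  "drop_map n s T =
     (if T = replicate s (Unb 1, Bar 1) then []
      else if inB n s T then T
      else (THE T'. drop_step n T T'))"

end

theory Submission
  imports Defs
begin

definition lec :: "nat \<Rightarrow> column \<Rightarrow> column \<Rightarrow> bool" where
  "lec n c d = (leq n (fst c) (fst d) \<and> leq n (snd c) (snd d))"

definition gp :: "column \<Rightarrow> column \<Rightarrow> bool" where
  "gp c d = (\<not> (fst d = fst c \<and> snd d = bar (fst c)) \<and> \<not> (snd c = bar (fst c) \<and> snd d = bar (fst c)))"

definition bad4 :: "nat \<Rightarrow> column \<Rightarrow> column \<Rightarrow> bool" where
  "bad4 n c d = ((c = (Unb (n - 1), Unb n) \<and> d = (Unb n, Bar (n - 1))) \<or>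
         (c = (Unb (n - 1), Bar n) \<and> d = (Bar n, Bar (n - 1))))"

lemma leq_trans: "leq n x y \<Longrightarrow> leq n y z \<Longrightarrow> leq n x z"
proof -
  assume a: "leq n x y" "leq n y z"
  show ?thesis
  proof (cases "x = y \<or> y = z")
    case True then show ?thesis using a by auto
  next
    case False
    then have r: "rank n x < rank n y" "rank n y < rank n z" using a unfolding leq_def by auto
    have "\<not> (x = Unb n \<and> z = Bar n)"
    proof
      assume "x = Unb n \<and> z = Bar n"
      then have "n < rank n y" "rank n y < n + 1" using r by auto
      then show False by simp
    qed
    moreover have "\<not> (x = Bar n \<and> z = Unb n)"
    proof
      assume "x = Bar n \<and> z = Unb n"
      then have "rank n x = n + 1" "rank n z = n" by auto
      then show False using r by simp
    qed
    ultimately show ?thesis using r unfolding leq_def by auto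
  qed
qed

lemma leq_antisym: "leq n x y \<Longrightarrow> leq n y x \<Longrightarrow> x = y"
  unfolding leq_def by auto

lemma transp_lec: "transp (lec n)"
  unfolding transp_def lec_def using leq_trans by blast

lemma lec_antisym: "lec n c d \<Longrightarrow> lec n d c \<Longrightarrow> c = d"
  unfolding lec_def using leq_antisym by (metis prod.expand)

lemma C1_iff: "C1 n T \<longleftrightarrow> sorted_wrt (lec n) T"
  by (simp add: C1_def successively_conv_sorted_wrt[OF transp_lec, symmetric] successively_conv_nth lec_def)

lemma C3_iff: "C3 T \<longleftrightarrow> successively gp T"
  unfolding C3_def successively_conv_nth gp_def by blast

lemma C4_iff: "C4 n T \<longleftrightarrow> sorted_wrt (\<lambda>c d. \<not> bad4 n c d) T"
  unfolding C4_def sorted_wrt_iff_nth_less bad4_def by blast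

lemma C2_iff: "C2 n T \<longleftrightarrow> (\<forall>c\<in>set T. \<not> leq n (snd c) (fst c))"
  unfolding C2_def by (simp add: all_set_conv_all_nth)

lemma sorted_two:
  assumes "sorted_wrt R xs" "c \<in> set xs" "d \<in> set xs"
  shows "c = d \<or> R c d \<or> R d c"
proof -
  obtain i where i: "i < length xs" "xs ! i = c" using assms(2) by (auto simp: in_set_conv_nth)
  obtain j where j: "j < length xs" "xs ! j = d" using assms(3) by (auto simp: in_set_conv_nth)
  consider "i < j" | "i = j" | "j < i" by linarith
  then show ?thesis using i j assms(1) sorted_wrt_nth_less by cases blast+
qed

lemma diag_unique:
  assumes "valid_letter n y" "valid_letter n a"
    "lec n (y, bar y) (a, bar a) \<or> lec n (a, bar a) (y, bar y)"
  shows "y = a"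
proof (rule ccontr)
  assume ne: "y \<noteq> a"
  then have ne2: "bar y \<noteq> bar a" by (cases y; cases a) auto
  from assms(3) ne ne2 have "(rank n y < rank n a \<and> rank n (bar y) < rank n (bar a)) \<or>
     (rank n a < rank n y \<and> rank n (bar a) < rank n (bar y))"
    unfolding lec_def leq_def by auto
  then show False using assms(1,2) unfolding valid_letter_def
    by (cases y; cases a) auto
qed

lemma diag_uniq_T:
  assumes "inTab n s T" "(y, bar y) \<in> set T" "(a, bar a) \<in> set T"
  shows "y = a"
proof -
  have s: "sorted_wrt (lec n) T" using assms(1) by (simp add: inTab_def C1_iff)
  have v: "valid_letter n y" "valid_letter n a" using assms unfolding inTab_def letters_ok_def by force+
  from sorted_two[OF s assms(2,3)] show ?thesis
    using diag_unique[OF v] by auto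
qed

lemma contig_right:
  assumes "sorted_wrt (lec n) (A @ [x] @ B)" "x \<in> set B"
  shows "B \<noteq> [] \<and> hd B = x"
proof (cases B)
  case Nil then show ?thesis using assms by simp
next
  case (Cons b B')
  show ?thesis
  proof (rule ccontr)
    assume "\<not> ?thesis"
    then have "b \<noteq> x" using Cons by simp
    then have "x \<in> set B'" using assms(2) Cons by simp
    have "lec n x b" using assms(1) Cons by (simp add: sorted_wrt_append)
    moreover have "lec n b x" using assms(1) Cons \<open>x \<in> set B'\<close> by (simp add: sorted_wrt_append)
    ultimately have "b = x" using lec_antisym by blast
    with \<open>b \<noteq> x\<close> show False by simp
  qed
qed

lemma contig_left:
  assumes "sorted_wrt (lec n) (A @ [x] @ B)" "x \<in> set A"
  shows "A \<noteq> [] \<and> last A = x"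
proof (cases A rule: rev_exhaust)
  case Nil then show ?thesis using assms by simp
next
  case (snoc A' b)
  show ?thesis
  proof (rule ccontr)
    assume "\<not> ?thesis"
    then have "b \<noteq> x" using snoc by simp
    then have "x \<in> set A'" using assms(2) snoc by simp
    have "lec n b x" using assms(1) snoc by (simp add: sorted_wrt_append)
    moreover have "lec n x b" using assms(1) snoc \<open>x \<in> set A'\<close> by (simp add: sorted_wrt_append)
    ultimately have "b = x" using lec_antisym by blast
    with \<open>b \<noteq> x\<close> show False by simp
  qed
qed

lemma decomp_ex:
  assumes "sorted_wrt (lec n) T" "x \<in> set T"
  shows "\<exists>P k Q. T = P @ replicate k x @ Q \<and> k \<ge> 1 \<and> x \<notin> set P \<and> x \<notin> set Q"
proof -
  define P where "P = takeWhile (\<lambda>c. c \<noteq> x) T"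
  define R where "R = dropWhile (\<lambda>c. c \<noteq> x) T"
  define k where "k = length (takeWhile (\<lambda>c. c = x) R)"
  define Q where "Q = dropWhile (\<lambda>c. c = x) R"
  have T: "T = P @ R" by (simp add: P_def R_def)
  have "\<forall>y\<in>set (takeWhile (\<lambda>c. c = x) R). y = x" by (auto dest: set_takeWhileD)
  then have tw: "takeWhile (\<lambda>c. c = x) R = replicate k x" unfolding k_def
    using replicate_length_same by metis
  have R: "R = replicate k x @ Q" unfolding Q_def using takeWhile_dropWhile_id[of "\<lambda>c. c = x" R] tw by simp
  have "R \<noteq> []" using assms(2) by (simp add: R_def dropWhile_eq_Nil_conv)
  have "hd R = x" using \<open>R \<noteq> []\<close> unfolding R_def using hd_dropWhile[of "\<lambda>c. c \<noteq> x" T] by simp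
  then obtain R' where "R = x # R'" using \<open>R \<noteq> []\<close> by (cases R) auto
  hence k1: "k \<ge> 1" unfolding k_def by simp
  have xP: "x \<notin> set P" by (auto simp: P_def dest: set_takeWhileD)
  have xQ: "x \<notin> set Q"
  proof
    assume "x \<in> set Q"
    obtain j where kj: "k = Suc j" using k1 by (cases k) auto
    have rs: "replicate k x = replicate j x @ [x]" unfolding kj by (simp add: replicate_append_same)
    have "T = (P @ replicate j x) @ [x] @ Q" using T R rs by simp
    then have "Q \<noteq> [] \<and> hd Q = x" using contig_right[of n "P @ replicate j x" x Q] assms(1) \<open>x \<in> set Q\<close> by simp
    moreover have "Q \<noteq> [] \<Longrightarrow> hd Q \<noteq> x" unfolding Q_def using hd_dropWhile[of "\<lambda>c. c = x" R] by simp
    ultimately show False by blast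
  qed
  show ?thesis using T R k1 xP xQ by blast
qed

lemma decomp_key:
  assumes "k \<ge> 1" "x \<notin> set P" "x \<notin> set Q"
  shows "takeWhile (\<lambda>c. c \<noteq> x) (P @ replicate k x @ Q) = P"
    "dropWhile (\<lambda>c. c \<noteq> x) (P @ replicate k x @ Q) = replicate k x @ Q"
    "takeWhile (\<lambda>c. c = x) (replicate k x @ Q) = replicate k x"
    "dropWhile (\<lambda>c. c = x) (replicate k x @ Q) = Q"
proof -
  obtain j where k: "k = Suc j" using assms(1) by (cases k) auto
  have a: "takeWhile (\<lambda>c. c = x) Q = []" "dropWhile (\<lambda>c. c = x) Q = Q" using assms(3) by (cases Q; auto)+
  show "takeWhile (\<lambda>c. c \<noteq> x) (P @ replicate k x @ Q) = P"
    using assms(2) k by (subst takeWhile_append2) auto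
  show "dropWhile (\<lambda>c. c \<noteq> x) (P @ replicate k x @ Q) = replicate k x @ Q"
    using assms(2) k by (subst dropWhile_append2) auto
  show "takeWhile (\<lambda>c. c = x) (replicate k x @ Q) = replicate k x"
    using a by (subst takeWhile_append2) auto
  show "dropWhile (\<lambda>c. c = x) (replicate k x @ Q) = Q"
    using a by (subst dropWhile_append2) auto
qed

lemma decomp_uniq:
  assumes "P @ replicate k x @ Q = P' @ replicate k' x @ Q'" "k \<ge> 1" "k' \<ge> 1"
    "x \<notin> set P" "x \<notin> set Q" "x \<notin> set P'" "x \<notin> set Q'"
  shows "P = P' \<and> Q = Q'"
proof -
  have 1: "P = P'" using decomp_key(1)[OF assms(2,4,5)] decomp_key(1)[OF assms(3,6,7)] assms(1) by simp
  have "replicate k x @ Q = replicate k' x @ Q'"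
    using decomp_key(2)[OF assms(2,4,5)] decomp_key(2)[OF assms(3,6,7)] assms(1) by simp
  then have "Q = Q'" using decomp_key(4)[OF assms(2,4,5)] decomp_key(4)[OF assms(3,6,7)] by metis
  with 1 show ?thesis by simp
qed


definition cond :: "letter \<Rightarrow> tableau \<Rightarrow> tableau \<Rightarrow> bool" where
  "cond a P Q = ((P \<noteq> [] \<and> fst (last P) = a) \<or> (Q \<noteq> [] \<and> snd (hd Q) = bar a))"

definition res :: "letter \<Rightarrow> tableau \<Rightarrow> tableau \<Rightarrow> tableau" where
  "res a P Q = (if cond a P Q then P @ Q else P @ [(a, bar a)] @ Q)"

lemma rep_split: "m \<ge> 1 \<Longrightarrow> \<exists>j. m = Suc j \<and> replicate m x = replicate j x @ [x] \<and> replicate m x = x # replicate j x"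
  by (cases m) (auto simp: replicate_append_same)

lemma step_canon:
  assumes tab: "inTab n s T" and st: "drop_step n T T'"
  shows "\<exists>a P k Q. T = P @ replicate k (a, bar a) @ Q \<and> k \<ge> 1 \<and> (a, bar a) \<notin> set P
     \<and> (a, bar a) \<notin> set Q \<and> T' = res a P Q"
proof -
  have so: "sorted_wrt (lec n) T" using tab by (simp add: inTab_def C1_iff)
  obtain a m P Q where m1: "m \<ge> 1" and cases:
     "(\<exists>b1. T = P @ [(a, b1)] @ replicate m (a, bar a) @ Q \<and> b1 \<noteq> bar a \<and>
            (Q = [] \<or> hd Q \<noteq> (a, bar a)) \<and> T' = P @ [(a, b1)] @ Q)
    \<or> (\<exists>d2. T = P @ replicate m (a, bar a) @ [(d2, bar a)] @ Q \<and> d2 \<noteq> a \<and>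
            (P = [] \<or> last P \<noteq> (a, bar a)) \<and> T' = P @ [(d2, bar a)] @ Q)
    \<or> (T = P @ replicate (m + 1) (a, bar a) @ Q \<and>
            (P = [] \<or> fst (last P) \<noteq> a) \<and> (Q = [] \<or> snd (hd Q) \<noteq> bar a) \<and>
            T' = P @ replicate 1 (a, bar a) @ Q)"
    using st unfolding drop_step_def by (elim exE conjE) (rule that; assumption)
  define x where "x = (a, bar a)"
  obtain j where j: "replicate m x = x # replicate j x" using m1 by (cases m) auto
  consider (i) b1 where "T = P @ [(a, b1)] @ replicate m (a, bar a) @ Q" "b1 \<noteq> bar a"
            "Q = [] \<or> hd Q \<noteq> (a, bar a)" "T' = P @ [(a, b1)] @ Q"
    | (ii) d2 where "T = P @ replicate m (a, bar a) @ [(d2, bar a)] @ Q" "d2 \<noteq> a"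
            "P = [] \<or> last P \<noteq> (a, bar a)" "T' = P @ [(d2, bar a)] @ Q"
    | (iii) "T = P @ replicate (m + 1) (a, bar a) @ Q"
            "P = [] \<or> fst (last P) \<noteq> a" "Q = [] \<or> snd (hd Q) \<noteq> bar a"
            "T' = P @ replicate 1 (a, bar a) @ Q"
    using cases by blast
  then show ?thesis
  proof cases
    fix b1 assume T: "T = P @ [(a, b1)] @ replicate m (a, bar a) @ Q" and b1: "b1 \<noteq> bar a"
      and Q: "Q = [] \<or> hd Q \<noteq> (a, bar a)" and T': "T' = P @ [(a, b1)] @ Q"
    define P1 where "P1 = P @ [(a, b1)]"
    have TT: "T = P1 @ [x] @ (replicate j x @ Q)" using T j unfolding P1_def x_def by simp
    have TT2: "T = (P1 @ replicate j x) @ [x] @ Q"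
      using T j unfolding P1_def x_def by (simp add: replicate_append_same[symmetric])
    have xP: "x \<notin> set P1"
    proof
      assume "x \<in> set P1"
      have "P1 \<noteq> [] \<and> last P1 = x" by (rule contig_left[OF so[unfolded TT] \<open>x \<in> set P1\<close>])
      then show False using b1 unfolding P1_def x_def by simp
    qed
    have xQ: "x \<notin> set Q"
    proof
      assume "x \<in> set Q"
      have "Q \<noteq> [] \<and> hd Q = x" by (rule contig_right[OF so[unfolded TT2] \<open>x \<in> set Q\<close>])
      then show False using Q unfolding x_def by simp
    qed
    have "cond a P1 Q" unfolding cond_def P1_def by simp
    then have "T' = res a P1 Q" unfolding res_def using T' P1_def by simp
    moreover have "T = P1 @ replicate m (a, bar a) @ Q" using T unfolding P1_def by simp
    ultimately have "T = P1 @ replicate m (a, bar a) @ Q \<and> m \<ge> 1 \<and> (a, bar a) \<notin> set P1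
     \<and> (a, bar a) \<notin> set Q \<and> T' = res a P1 Q" using xP xQ m1 unfolding x_def by simp
    then show ?thesis by blast
  next
    fix d2 assume T: "T = P @ replicate m (a, bar a) @ [(d2, bar a)] @ Q" and d2: "d2 \<noteq> a"
      and P: "P = [] \<or> last P \<noteq> (a, bar a)" and T': "T' = P @ [(d2, bar a)] @ Q"
    define Q1 where "Q1 = (d2, bar a) # Q"
    have TT: "T = P @ [x] @ (replicate j x @ Q1)" using T j unfolding Q1_def x_def by simp
    have TT2: "T = (P @ replicate j x) @ [x] @ Q1"
      using T j unfolding Q1_def x_def by (simp add: replicate_append_same[symmetric])
    have xP: "x \<notin> set P"
    proof
      assume "x \<in> set P"
      have "P \<noteq> [] \<and> last P = x" by (rule contig_left[OF so[unfolded TT] \<open>x \<in> set P\<close>])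
      then show False using P unfolding x_def by simp
    qed
    have xQ: "x \<notin> set Q1"
    proof
      assume "x \<in> set Q1"
      have "Q1 \<noteq> [] \<and> hd Q1 = x" by (rule contig_right[OF so[unfolded TT2] \<open>x \<in> set Q1\<close>])
      then show False using d2 unfolding Q1_def x_def by simp
    qed
    have "cond a P Q1" unfolding cond_def Q1_def by simp
    then have "T' = res a P Q1" unfolding res_def using T' Q1_def by simp
    moreover have "T = P @ replicate m (a, bar a) @ Q1" using T unfolding Q1_def by simp
    ultimately have "T = P @ replicate m (a, bar a) @ Q1 \<and> m \<ge> 1 \<and> (a, bar a) \<notin> set P
     \<and> (a, bar a) \<notin> set Q1 \<and> T' = res a P Q1" using xP xQ m1 unfolding x_def by simp
    then show ?thesis by blast
  next
    assume T: "T = P @ replicate (m + 1) (a, bar a) @ Q"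
      and P: "P = [] \<or> fst (last P) \<noteq> a" and Q: "Q = [] \<or> snd (hd Q) \<noteq> bar a"
      and T': "T' = P @ replicate 1 (a, bar a) @ Q"
    have TT: "T = P @ [x] @ (replicate m x @ Q)" using T unfolding x_def by simp
    have TT2: "T = (P @ replicate m x) @ [x] @ Q" using T unfolding x_def
      by (simp add: replicate_append_same[symmetric])
    have xP: "x \<notin> set P"
    proof
      assume "x \<in> set P"
      have "P \<noteq> [] \<and> last P = x" by (rule contig_left[OF so[unfolded TT] \<open>x \<in> set P\<close>])
      then show False using P unfolding x_def by auto
    qed
    have xQ: "x \<notin> set Q"
    proof
      assume "x \<in> set Q"
      have "Q \<noteq> [] \<and> hd Q = x" by (rule contig_right[OF so[unfolded TT2] \<open>x \<in> set Q\<close>])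
      then show False using Q unfolding x_def by auto
    qed
    have "\<not> cond a P Q" unfolding cond_def using P Q by auto
    then have "T' = res a P Q" unfolding res_def using T' by simp
    then have "T = P @ replicate (m + 1) (a, bar a) @ Q \<and> m + 1 \<ge> 1 \<and> (a, bar a) \<notin> set P
     \<and> (a, bar a) \<notin> set Q \<and> T' = res a P Q" using xP xQ T unfolding x_def by simp
    then show ?thesis by blast
  qed
qed

lemma step_uniq:
  assumes tab: "inTab n s T" and "drop_step n T T1" "drop_step n T T2"
  shows "T1 = T2"
proof -
  obtain a P k Q where 1: "T = P @ replicate k (a, bar a) @ Q" "k \<ge> 1" "(a, bar a) \<notin> set P"
     "(a, bar a) \<notin> set Q" "T1 = res a P Q" using step_canon[OF tab assms(2)] by blast
  obtain a' P' k' Q' where 2: "T = P' @ replicate k' (a', bar a') @ Q'" "k' \<ge> 1" "(a', bar a') \<notin> set P'"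
     "(a', bar a') \<notin> set Q'" "T2 = res a' P' Q'" using step_canon[OF tab assms(3)] by blast
  have "(a, bar a) \<in> set T" using 1(1,2) by auto
  moreover have "(a', bar a') \<in> set T" using 2(1,2) by auto
  ultimately have aa: "a' = a" using diag_uniq_T[OF tab] by blast
  have "P = P' \<and> Q = Q'" using decomp_uniq[of P k "(a, bar a)" Q P' k' Q'] 1 2 aa by simp
  then show ?thesis using 1 2 aa by simp
qed

lemma nondiag_succ: "\<forall>c\<in>set L. snd c \<noteq> bar (fst c) \<Longrightarrow> successively gp L"
  by (induction L rule: induct_list012) (auto simp: gp_def)

lemma leq_Unb1: "valid_letter n y \<Longrightarrow> leq n y (Unb 1) \<Longrightarrow> y = Unb 1"
  unfolding valid_letter_def leq_def by (cases y) auto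

lemma Bar1_leq: "valid_letter n y \<Longrightarrow> leq n (Bar 1) y \<Longrightarrow> y = Bar 1"
  unfolding valid_letter_def leq_def by (cases y) auto

lemma sub_sorted_gen:
  assumes "sorted_wrt R (P @ M @ Q)" "set M' \<subseteq> set M" "sorted_wrt R M'"
  shows "sorted_wrt R (P @ M' @ Q)"
proof -
  have h: "sorted_wrt R P" "sorted_wrt R (M @ Q)" "\<forall>u\<in>set P. \<forall>v\<in>set (M @ Q). R u v"
    using assms(1) sorted_wrt_append[of R P "M @ Q"] by simp_all
  have h2: "sorted_wrt R M" "sorted_wrt R Q" "\<forall>u\<in>set M. \<forall>v\<in>set Q. R u v"
    using h(2) sorted_wrt_append[of R M Q] by simp_all
  have "sorted_wrt R (M' @ Q)" unfolding sorted_wrt_append using h2 assms(2,3) by blast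
  moreover have "\<forall>u\<in>set P. \<forall>v\<in>set (M' @ Q). R u v" using h(3) assms(2) by auto
  ultimately show ?thesis unfolding sorted_wrt_append[of R P] using h(1) by blast
qed

lemma sub_sorted:
  assumes "sorted_wrt R (P @ replicate k x @ Q)" "k \<ge> 1"
  shows "sorted_wrt R (P @ Q)" "sorted_wrt R (P @ [x] @ Q)"
proof -
  have "set [x] \<subseteq> set (replicate k x)" using assms(2) by simp
  then show "sorted_wrt R (P @ [x] @ Q)" using sub_sorted_gen[OF assms(1), of "[x]"] by simp
  show "sorted_wrt R (P @ Q)" using sub_sorted_gen[OF assms(1), of "[]"] by simp
qed

lemma res_good:
  assumes tab: "inTab n s T" and T: "T = P @ replicate k (a, bar a) @ Q" and k1: "k \<ge> 1"
    and xP: "(a, bar a) \<notin> set P" and xQ: "(a, bar a) \<notin> set Q"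
    and nr: "T \<noteq> replicate s (Unb 1, Bar 1)"
  shows "inB n (length (res a P Q)) (res a P Q)" "length (res a P Q) \<le> s"
proof -
  define x where "x = (a, bar a)"
  define T' where "T' = res a P Q"
  obtain j where j: "replicate k x = x # replicate j x" using k1 by (cases k) auto
  have TT: "T = P @ x # replicate j x @ Q" using T j unfolding x_def by simp
  have len: "length T = s" using tab by (simp add: inTab_def)
  have so: "sorted_wrt (lec n) T" using tab by (simp add: inTab_def C1_iff)
  have s4: "sorted_wrt (\<lambda>c d. \<not> bad4 n c d) T" using tab by (simp add: inTab_def C4_iff)
  have c2: "\<forall>c\<in>set T. \<not> leq n (snd c) (fst c)" using tab by (simp add: inTab_def C2_iff)
  have lo: "letters_ok n T" using tab by (simp add: inTab_def)
  have xT: "x \<in> set T" unfolding TT by simp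
  have PT: "set P \<subseteq> set T" "set Q \<subseteq> set T" unfolding TT by auto
  have sub: "set T' \<subseteq> set T"
  proof (cases "cond a P Q")
    case True then show ?thesis unfolding T'_def res_def using PT by simp
  next
    case False then show ?thesis unfolding T'_def res_def using PT xT x_def by simp
  qed
  have srt: "sorted_wrt R T'" if "sorted_wrt R T" for R
  proof -
    have "sorted_wrt R (P @ replicate k x @ Q)" using that T unfolding x_def by simp
    then show ?thesis using sub_sorted[of R P k x Q] k1 unfolding T'_def res_def x_def by simp
  qed
  have diagT: "c = x" if "c \<in> set T" "snd c = bar (fst c)" for c
  proof -
    obtain u v where c: "c = (u, v)" by (cases c)
    then have "v = bar u" using that by simp
    then have "(u, bar u) \<in> set T" using that c by simp
    then have "u = a" using diag_uniq_T[OF tab] xT unfolding x_def by blast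
    then show ?thesis using c \<open>v = bar u\<close> unfolding x_def by simp
  qed
  have nd: "\<forall>c\<in>set P. snd c \<noteq> bar (fst c)" "\<forall>c\<in>set Q. snd c \<noteq> bar (fst c)"
    using diagT PT xP xQ unfolding x_def by blast+
  have C3': "successively gp T'"
  proof (cases "cond a P Q")
    case True
    then have "T' = P @ Q" unfolding T'_def res_def by simp
    moreover have "\<forall>c\<in>set (P @ Q). snd c \<noteq> bar (fst c)" using nd by auto
    ultimately show ?thesis using nondiag_succ by simp
  next
    case False
    then have T': "T' = P @ [x] @ Q" unfolding T'_def res_def x_def by simp
    have sP: "successively gp P" "successively gp Q" using nd nondiag_succ by auto
    have j1: "P = [] \<or> gp (last P) x"
    proof (cases "P = []")
      case False
      then have "last P \<in> set P" by simp
      then have "snd (last P) \<noteq> bar (fst (last P))" using nd(1) by blast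
      moreover have "fst (last P) \<noteq> a" using \<open>\<not> cond a P Q\<close> False unfolding cond_def by simp
      ultimately show ?thesis unfolding gp_def x_def by auto
    qed simp
    have j2: "Q = [] \<or> gp x (hd Q)"
    proof (cases "Q = []")
      case False
      then have "hd Q \<in> set Q" by simp
      then have "snd (hd Q) \<noteq> bar (fst (hd Q))" using nd(2) by blast
      moreover have "snd (hd Q) \<noteq> bar a" using \<open>\<not> cond a P Q\<close> False unfolding cond_def by simp
      ultimately show ?thesis unfolding gp_def x_def by auto
    qed simp
    have "successively gp ([x] @ Q)" using sP(2) j2 successively_append_iff[of gp "[x]" Q] by auto
    then show ?thesis unfolding T' using sP(1) j1 successively_append_iff[of gp P "[x] @ Q"] by auto
  qed
  have C5': "C5 T'"
  proof (rule ccontr)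
    assume "\<not> C5 T'"
    then have in1': "(Unb 1, Bar 1) \<in> set T'" unfolding C5_def by simp
    then have in1: "(Unb 1, Bar 1) \<in> set T" using sub by auto
    have "(Unb 1, Bar 1) = x" using diagT[OF in1] by simp
    then have a1: "a = Unb 1" and xx: "x = (Unb 1, Bar 1)" unfolding x_def by auto
    have nc: "\<not> cond a P Q"
    proof
      assume "cond a P Q"
      then have "T' = P @ Q" unfolding T'_def res_def by simp
      then show False using in1' xP xQ xx x_def by auto
    qed
    have "P = []"
    proof (rule ccontr)
      assume "P \<noteq> []"
      then have lp: "last P \<in> set P" by simp
      have "\<forall>u\<in>set P. \<forall>v\<in>set (x # replicate j x @ Q). lec n u v"
        using so unfolding TT sorted_wrt_append by blast
      then have "lec n (last P) x" using lp by simp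
      then have "leq n (fst (last P)) (Unb 1)" unfolding lec_def xx by simp
      moreover have "valid_letter n (fst (last P))" using lo lp PT unfolding letters_ok_def by blast
      ultimately have "fst (last P) = a" using leq_Unb1 a1 by blast
      then show False using nc \<open>P \<noteq> []\<close> unfolding cond_def by simp
    qed
    moreover have "Q = []"
    proof (rule ccontr)
      assume "Q \<noteq> []"
      then have lp: "hd Q \<in> set Q" by simp
      have TT3: "T = (P @ replicate j x) @ [x] @ Q" using TT by (simp add: replicate_append_same[symmetric])
      have "\<forall>u\<in>set (P @ replicate j x @ [x]). \<forall>v\<in>set Q. lec n u v"
        using so unfolding TT3 append_assoc[symmetric] sorted_wrt_append[of _ "(P @ replicate j x) @ [x]"] by blast
      then have "lec n x (hd Q)" using lp by simp
      then have "leq n (Bar 1) (snd (hd Q))" unfolding lec_def xx by simp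
      moreover have "valid_letter n (snd (hd Q))" using lo lp PT unfolding letters_ok_def by blast
      ultimately have "snd (hd Q) = bar a" using Bar1_leq a1 by simp
      then show False using nc \<open>Q \<noteq> []\<close> unfolding cond_def by simp
    qed
    ultimately have "T = replicate k (Unb 1, Bar 1)" using T xx x_def by simp
    then show False using nr len by simp
  qed
  have lenle: "length T' \<le> s"
  proof (cases "cond a P Q")
    case True then show ?thesis unfolding T'_def res_def using len TT by simp
  next
    case False then show ?thesis unfolding T'_def res_def using len TT by simp
  qed
  have l': "letters_ok n T'" using lo sub unfolding letters_ok_def by blast
  have c2': "C2 n T'" unfolding C2_iff using c2 sub by blast
  have c1': "C1 n T'" unfolding C1_iff using srt[OF so] .
  have c4': "C4 n T'" unfolding C4_iff using srt[OF s4] .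
  have c3': "C3 T'" unfolding C3_iff using C3' .
  have "inB n (length T') T'" unfolding inB_def using l' c1' c2' c3' c4' C5' by simp
  then show "inB n (length (res a P Q)) (res a P Q)" "length (res a P Q) \<le> s"
    using lenle unfolding T'_def by auto
qed


lemma letter_ok_diag:
  assumes "valid_letter n y" "\<not> leq n (bar y) y"
  shows "y \<in> Unb ` {1..n} \<or> y = Bar n"
proof (cases y)
  case (Unb i) then show ?thesis using assms(1) unfolding valid_letter_def by auto
next
  case (Bar i)
  then have "1 \<le> i" "i \<le> n" using assms(1) unfolding valid_letter_def by auto
  moreover have "\<not> leq n (Unb i) (Bar i)" using assms(2) Bar by simp
  ultimately have "i = n" unfolding leq_def by auto
  then show ?thesis using Bar by simp
qed

theorem theorem4p2:
  fixes n s :: nat and T :: tableau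
  assumes "n \<ge> 4" and "s \<ge> 1" and "inTab n s T"
  shows "\<exists>k \<le> s. inB n k (drop_map n s T)"
proof -
  have tab: "inTab n s T" by (rule assms(3))
  show ?thesis
  proof (cases "T = replicate s (Unb 1, Bar 1)")
    case True
    then have "drop_map n s T = []" unfolding drop_map_def by simp
    moreover have "inB n 0 []" unfolding inB_def letters_ok_def C1_def C2_def C3_def C4_def C5_def by simp
    ultimately show ?thesis by auto
  next
    case nr: False
    show ?thesis
    proof (cases "inB n s T")
      case True
      then have "drop_map n s T = T" unfolding drop_map_def using nr by simp
      then show ?thesis using True by auto
    next
      case nB: False
      have so: "sorted_wrt (lec n) T" using tab by (simp add: inTab_def C1_iff)
      have c2: "\<forall>c\<in>set T. \<not> leq n (snd c) (fst c)" using tab by (simp add: inTab_def C2_iff)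
      have lo: "letters_ok n T" using tab by (simp add: inTab_def)
      have len: "length T = s" using tab by (simp add: inTab_def)
      have "\<not> C3 T \<or> \<not> C5 T" using nB tab unfolding inB_def inTab_def by auto
      then have "\<exists>y. (y, bar y) \<in> set T"
      proof
        assume "\<not> C3 T"
        then obtain j z where j: "Suc j < length T"
          and d: "(fst (T ! Suc j) = z \<and> snd (T ! Suc j) = bar z) \<or> (fst (T ! j) = z \<and> snd (T ! j) = bar z)"
          unfolding C3_def by blast
        have m1: "T ! Suc j \<in> set T" "T ! j \<in> set T" using j by simp_all
        from d show ?thesis
        proof
          assume "fst (T ! Suc j) = z \<and> snd (T ! Suc j) = bar z"
          then have "T ! Suc j = (z, bar z)" by (metis prod.collapse)
          then show ?thesis using m1 by metis
        next
          assume "fst (T ! j) = z \<and> snd (T ! j) = bar z"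
          then have "T ! j = (z, bar z)" by (metis prod.collapse)
          then show ?thesis using m1 by metis
        qed
      next
        assume "\<not> C5 T"
        then have "(Unb 1, bar (Unb 1)) \<in> set T" unfolding C5_def by simp
        then show ?thesis by blast
      qed
      then obtain y where yT: "(y, bar y) \<in> set T" by blast
      define x where "x = (y, bar y)"
      obtain P k Q where D: "T = P @ replicate k x @ Q" "k \<ge> 1" "x \<notin> set P" "x \<notin> set Q"
        using decomp_ex[OF so, of x] yT unfolding x_def by blast
      have yv: "y \<in> Unb ` {1..n} \<or> y = Bar n"
        using letter_ok_diag[of n y] lo c2 yT unfolding letters_ok_def by fastforce
      have ex: "\<exists>T'. drop_step n T T'"
      proof (cases "P \<noteq> [] \<and> fst (last P) = y")
        case True
        define b1 where "b1 = snd (last P)"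
        have lP: "last P = (y, b1)" using True b1_def by (metis prod.collapse)
        define P0 where "P0 = butlast P"
        have Pe: "P = P0 @ [(y, b1)]" using True lP unfolding P0_def by (metis append_butlast_last_id)
        have "last P \<in> set P" using True by simp
        then have "last P \<noteq> x" using D(3) by metis
        then have b1: "b1 \<noteq> bar y" using lP x_def by auto
        have Qc: "Q = [] \<or> hd Q \<noteq> (y, bar y)" using D(4) unfolding x_def by (cases Q) auto
        have TT: "T = P0 @ [(y, b1)] @ replicate k (y, bar y) @ Q" using D(1) Pe unfolding x_def by simp
        have "drop_step n T (P0 @ [(y, b1)] @ Q)" unfolding drop_step_def
          apply (rule exI[of _ y], rule exI[of _ k], rule exI[of _ P0], rule exI[of _ Q])
          using yv D(2) TT b1 Qc by blast
        then show ?thesis by blast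
      next
        case F1: False
        show ?thesis
        proof (cases "Q \<noteq> [] \<and> snd (hd Q) = bar y")
          case True
          define d2 where "d2 = fst (hd Q)"
          define Q0 where "Q0 = tl Q"
          have hQ: "hd Q = (d2, bar y)" using True d2_def by (metis prod.collapse)
          have Qe: "Q = (d2, bar y) # Q0" using True hQ unfolding Q0_def by (metis list.collapse)
          have "hd Q \<in> set Q" using True by simp
          then have "hd Q \<noteq> x" using D(4) by metis
          then have d2: "d2 \<noteq> y" using hQ x_def by auto
          have Pc: "P = [] \<or> last P \<noteq> (y, bar y)" using D(3) unfolding x_def by (metis last_in_set)
          have TT: "T = P @ replicate k (y, bar y) @ [(d2, bar y)] @ Q0" using D(1) Qe unfolding x_def by simp
          have "drop_step n T (P @ [(d2, bar y)] @ Q0)" unfolding drop_step_def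
            apply (rule exI[of _ y], rule exI[of _ k], rule exI[of _ P], rule exI[of _ Q0])
            using yv D(2) TT d2 Pc by blast
          then show ?thesis by blast
        next
          case F2: False
          have nc: "\<not> cond y P Q" unfolding cond_def using F1 F2 by auto
          show ?thesis
          proof (cases "k = 1")
            case True
            have "res y P Q = T" unfolding res_def using nc D(1) True x_def by simp
            then have "inB n s T" using res_good(1)[OF tab D(1)[unfolded x_def] D(2) D(3,4)[unfolded x_def] nr] len by simp
            then show ?thesis using nB by simp
          next
            case False
            then have k2: "k - 1 \<ge> 1" "k - 1 + 1 = k" using D(2) by auto
            have TT: "T = P @ replicate (k - 1 + 1) (y, bar y) @ Q" using D(1) k2 unfolding x_def by simp
            have Pc: "P = [] \<or> fst (last P) \<noteq> y" using F1 by auto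
            have Qc: "Q = [] \<or> snd (hd Q) \<noteq> bar y" using F2 by auto
            have "drop_step n T (P @ replicate 1 (y, bar y) @ Q)" unfolding drop_step_def
              apply (rule exI[of _ y], rule exI[of _ "k - 1"], rule exI[of _ P], rule exI[of _ Q])
              using yv k2(1) TT Pc Qc by blast
            then show ?thesis by blast
          qed
        qed
      qed
      then obtain T0 where st: "drop_step n T T0" by blast
      have the: "(THE T'. drop_step n T T') = T0"
      proof (rule the_equality)
        show "drop_step n T T0" by (rule st)
      next
        fix T' assume "drop_step n T T'"
        then show "T' = T0" using step_uniq[OF tab st] by metis
      qed
      then have dm: "drop_map n s T = T0" unfolding drop_map_def using nr nB by simp
      obtain a P' k' Q' where C: "T = P' @ replicate k' (a, bar a) @ Q'" "k' \<ge> 1" "(a, bar a) \<notin> set P'"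
         "(a, bar a) \<notin> set Q'" "T0 = res a P' Q'" using step_canon[OF tab st] by blast
      have "inB n (length T0) T0" "length T0 \<le> s"
        using res_good[OF tab C(1-4) nr] C(5) by simp_all
      then show ?thesis using dm by auto
    qed
  qed
qed

end
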